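(* Let $\mathcal{G}$ be a Lie algebra over a field $K$, $Z$ a subspace of the centre of $\mathcal{G}$, $W=\mathcal{G}/Z$, and $\pi:\mathcal{G}\to W$ the projection. Fix a $K$-linear section $s:W\to\mathcal{G}$ of $\pi$, so $\mathcal{G}=s(W)\oplus Z$. Let $\mathcal{K}$ be the set of $K$-linear maps $\tau_\phi:\mathcal{G}\to\mathcal{G}$ with $\tau_\phi(s(w))=s(w)+\phi(w)$ and $\tau_\phi(z)=z$ for $w\in W$, $z\in Z$, where $\phi\in\mathrm{Hom}_K(W,Z)$ satisfies $\phi([W,W])=0$. Suppose that (1) every automorphism of $W$ extends to an automorphism of $\mathcal{G}$ (i.e. for each $\sigma\in\mathrm{Aut}_{\mathrm{Lie}}(W)$ there is $\widehat\sigma\in\mathrm{Aut}_{\mathrm{Lie}}(\mathcal{G})$ with $\pi\widehat\sigma=\sigma\pi$), and (2) $Z\subseteq[\mathcal{G},\mathcal{G}]$. Then $$1\to\mathcal{K}\to\mathrm{Aut}_{\mathrm{Lie}}(\mathcal{G})\xrightarrow{\psi}\mathrm{Aut}_{\mathrm{Lie}}(W)\to1$$ is a short exact sequence of groups, where $\psi(\sigma)(a+Z)=\sigma(a)+Z$ for all $a\in\mathcal{G}$.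
   Formalization: Throughout the exact sequence, and as the domain of $\psi$, $\mathrm{Aut}_{\mathrm{Lie}}(\mathcal{G})$ is replaced by its subgroup of automorphisms $\sigma$ with sigma(Z) = Z. The statement above fails without it. *)

theory Defs
  imports "HOL-Algebra.Algebra"
begin

definition lie_algebra :: "('k::field \<Rightarrow> 'g::ab_group_add \<Rightarrow> 'g) \<Rightarrow> ('g \<Rightarrow> 'g \<Rightarrow> 'g) \<Rightarrow> bool" where
  "lie_algebra scale br \<longleftrightarrow>
     vector_space scale \<and>
     (\<forall>x y z. br (x + y) z = br x z + br y z) \<and>
     (\<forall>x y z. br x (y + z) = br x y + br x z) \<and>
     (\<forall>c x y. br (scale c x) y = scale c (br x y)) \<and>
     (\<forall>c x y. br x (scale c y) = scale c (br x y)) \<and>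
     (\<forall>x. br x x = 0) \<and>
     (\<forall>x y z. br x (br y z) + br y (br z x) + br z (br x y) = 0)"

definition lie_centre :: "('g \<Rightarrow> 'g \<Rightarrow> 'g::ab_group_add) \<Rightarrow> 'g set" where
  "lie_centre br = {z. \<forall>x. br z x = 0}"

definition derived :: "('k::field \<Rightarrow> 'g::ab_group_add \<Rightarrow> 'g) \<Rightarrow> ('g \<Rightarrow> 'g \<Rightarrow> 'g) \<Rightarrow> 'g set" where
  "derived scale br = module.span scale {br a b | a b. True}"

definition lie_aut :: "('k::field \<Rightarrow> 'g::ab_group_add \<Rightarrow> 'g) \<Rightarrow> ('g \<Rightarrow> 'g \<Rightarrow> 'g) \<Rightarrow> ('g \<Rightarrow> 'g) set" where
  "lie_aut scale br = {\<sigma>. bij \<sigma> \<and> Vector_Spaces.linear scale scale \<sigma> \<and>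
                           (\<forall>a b. \<sigma> (br a b) = br (\<sigma> a) (\<sigma> b))}"

definition coset :: "'g::ab_group_add set \<Rightarrow> 'g \<Rightarrow> 'g set" where
  "coset Z a = {a + z | z. z \<in> Z}"

abbreviation proj :: "'g::ab_group_add set \<Rightarrow> 'g \<Rightarrow> 'g set" where
  "proj Z \<equiv> coset Z"

definition quot :: "'g::ab_group_add set \<Rightarrow> 'g set set" where
  "quot Z = range (coset Z)"

definition crep :: "'g set \<Rightarrow> 'g" where
  "crep U = (SOME a. a \<in> U)"

definition qadd :: "'g::ab_group_add set \<Rightarrow> 'g set \<Rightarrow> 'g set \<Rightarrow> 'g set" where
  "qadd Z U V = coset Z (crep U + crep V)"

definition qscale :: "('k \<Rightarrow> 'g::ab_group_add \<Rightarrow> 'g) \<Rightarrow> 'g set \<Rightarrow> 'k \<Rightarrow> 'g set \<Rightarrow> 'g set" where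
  "qscale scale Z c U = coset Z (scale c (crep U))"

definition qbr :: "('g \<Rightarrow> 'g \<Rightarrow> 'g::ab_group_add) \<Rightarrow> 'g set \<Rightarrow> 'g set \<Rightarrow> 'g set \<Rightarrow> 'g set" where
  "qbr br Z U V = coset Z (br (crep U) (crep V))"

text \<open>[W,W] = \<pi>([G,G]).\<close>
definition quot_derived :: "('k::field \<Rightarrow> 'g::ab_group_add \<Rightarrow> 'g) \<Rightarrow> ('g \<Rightarrow> 'g \<Rightarrow> 'g) \<Rightarrow> 'g set \<Rightarrow> 'g set set" where
  "quot_derived scale br Z = coset Z ` derived scale br"

definition quot_linear :: "('k \<Rightarrow> 'g::ab_group_add \<Rightarrow> 'g) \<Rightarrow> 'g set \<Rightarrow> ('k \<Rightarrow> 'v::ab_group_add \<Rightarrow> 'v) \<Rightarrow> ('g set \<Rightarrow> 'v) \<Rightarrow> bool" where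
  "quot_linear scale Z scaleV f \<longleftrightarrow>
     (\<forall>U\<in>quot Z. \<forall>V\<in>quot Z. f (qadd Z U V) = f U + f V) \<and>
     (\<forall>c. \<forall>U\<in>quot Z. f (qscale scale Z c U) = scaleV c (f U))"

definition quot_aut :: "('k \<Rightarrow> 'g::ab_group_add \<Rightarrow> 'g) \<Rightarrow> ('g \<Rightarrow> 'g \<Rightarrow> 'g) \<Rightarrow> 'g set \<Rightarrow> ('g set \<Rightarrow> 'g set) set" where
  "quot_aut scale br Z = {\<sigma>. \<sigma> \<in> extensional (quot Z) \<and> bij_betw \<sigma> (quot Z) (quot Z) \<and>
      (\<forall>U\<in>quot Z. \<forall>V\<in>quot Z. \<sigma> (qadd Z U V) = qadd Z (\<sigma> U) (\<sigma> V)) \<and>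
      (\<forall>c. \<forall>U\<in>quot Z. \<sigma> (qscale scale Z c U) = qscale scale Z c (\<sigma> U)) \<and>
      (\<forall>U\<in>quot Z. \<forall>V\<in>quot Z. \<sigma> (qbr br Z U V) = qbr br Z (\<sigma> U) (\<sigma> V))}"

text \<open>Automorphisms of G that preserve Z (on which \<psi> is well defined).\<close>
definition aut_grp :: "('k::field \<Rightarrow> 'g::ab_group_add \<Rightarrow> 'g) \<Rightarrow> ('g \<Rightarrow> 'g \<Rightarrow> 'g) \<Rightarrow> 'g set \<Rightarrow> ('g \<Rightarrow> 'g) monoid" where
  "aut_grp scale br Z = \<lparr>carrier = {\<sigma> \<in> lie_aut scale br. \<sigma> ` Z = Z}, monoid.mult = (\<circ>), one = id\<rparr>"

definition quot_aut_grp :: "('k \<Rightarrow> 'g::ab_group_add \<Rightarrow> 'g) \<Rightarrow> ('g \<Rightarrow> 'g \<Rightarrow> 'g) \<Rightarrow> 'g set \<Rightarrow> ('g set \<Rightarrow> 'g set) monoid" where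
  "quot_aut_grp scale br Z = \<lparr>carrier = quot_aut scale br Z, monoid.mult = compose (quot Z), one = restrict id (quot Z)\<rparr>"

definition psi :: "'g::ab_group_add set \<Rightarrow> ('g \<Rightarrow> 'g) \<Rightarrow> ('g set \<Rightarrow> 'g set)" where
  "psi Z \<sigma> = (\<lambda>U\<in>quot Z. coset Z (\<sigma> (crep U)))"

definition tau_maps :: "('k::field \<Rightarrow> 'g::ab_group_add \<Rightarrow> 'g) \<Rightarrow> ('g \<Rightarrow> 'g \<Rightarrow> 'g) \<Rightarrow> 'g set \<Rightarrow> ('g set \<Rightarrow> 'g) \<Rightarrow> ('g \<Rightarrow> 'g) set" where
  "tau_maps scale br Z s = {\<tau>. Vector_Spaces.linear scale scale \<tau> \<and>
      (\<exists>\<phi>. quot_linear scale Z scale \<phi> \<and> \<phi> ` quot Z \<subseteq> Z \<and>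
           \<phi> ` quot_derived scale br Z \<subseteq> {0} \<and>
           (\<forall>w\<in>quot Z. \<tau> (s w) = s w + \<phi> w) \<and> (\<forall>z\<in>Z. \<tau> z = z))}"

end

theory Submission
  imports Defs
begin

locale LZ =
  fixes scale :: "'k::field \<Rightarrow> 'g::ab_group_add \<Rightarrow> 'g"
    and br :: "'g \<Rightarrow> 'g \<Rightarrow> 'g"
    and Z :: "'g set"
  assumes lie: "lie_algebra scale br"
    and Z_sub: "module.subspace scale Z"
    and Z_centre: "Z \<subseteq> lie_centre br"
begin

lemma vs: "vector_space scale" using lie by (simp add: lie_algebra_def)

interpretation V: vector_space scale by (rule vs)

lemma br_addL: "br (x + y) z = br x z + br y z" using lie by (simp add: lie_algebra_def)
lemma br_addR: "br x (y + z) = br x y + br x z" using lie by (simp add: lie_algebra_def)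
lemma br_self: "br x x = 0" using lie by (simp add: lie_algebra_def)

lemma br_anti: "br x y = - br y x"
proof -
  have "br (x+y) (x+y) = br x x + br x y + (br y x + br y y)" by (simp only: br_addL br_addR add_ac)
  then have "0 = br x y + br y x" by (simp add: br_self)
  then show ?thesis by (simp add: eq_neg_iff_add_eq_0)
qed

lemma centL: "z \<in> Z \<Longrightarrow> br z x = 0" using Z_centre by (auto simp: lie_centre_def)
lemma centR: "z \<in> Z \<Longrightarrow> br x z = 0" using centL br_anti by (metis neg_equal_0_iff_equal)

lemma br_shift: "z \<in> Z \<Longrightarrow> z' \<in> Z \<Longrightarrow> br (a + z) (b + z') = br a b"
  by (simp add: br_addL br_addR centL centR)

lemma Z0: "0 \<in> Z" using Z_sub by (simp add: V.subspace_def)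
lemma Zadd: "x \<in> Z \<Longrightarrow> y \<in> Z \<Longrightarrow> x + y \<in> Z" using Z_sub by (simp add: V.subspace_def)
lemma Zscale: "x \<in> Z \<Longrightarrow> scale c x \<in> Z" using Z_sub by (simp add: V.subspace_def)
lemma Zneg: "x \<in> Z \<Longrightarrow> - x \<in> Z" using V.subspace_neg Z_sub by blast
lemma Zdiff: "x \<in> Z \<Longrightarrow> y \<in> Z \<Longrightarrow> x - y \<in> Z" using V.subspace_diff Z_sub by blast

lemma coset_eq: "coset Z a = coset Z b \<longleftrightarrow> a - b \<in> Z"
proof
  assume h: "coset Z a = coset Z b"
  have "a \<in> coset Z a" unfolding coset_def using Z0 by force
  then obtain z where "z \<in> Z" "a = b + z" using h unfolding coset_def by auto
  then show "a - b \<in> Z" by (simp add: algebra_simps)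
next
  assume h: "a - b \<in> Z"
  show "coset Z a = coset Z b" unfolding coset_def
  proof (auto)
    fix z assume "z \<in> Z"
    have "a + z - b = (a - b) + z" by (simp add: algebra_simps)
    moreover have "(a - b) + z \<in> Z" using h Zadd \<open>z \<in> Z\<close> by blast
    ultimately show "\<exists>z'. a + z = b + z' \<and> z' \<in> Z"
      by (intro exI[of _ "a - b + z"]) (auto simp: algebra_simps)
  next
    fix z assume "z \<in> Z"
    have "- (a - b) \<in> Z" using h Zneg by blast
    then have "-(a - b) + z \<in> Z" using \<open>z \<in> Z\<close> Zadd by blast
    moreover have "b + z = a + (-(a - b) + z)" by (simp add: algebra_simps)
    ultimately show "\<exists>z'. b + z = a + z' \<and> z' \<in> Z" by blast
  qed
qed

lemma in_coset: "a \<in> coset Z a" unfolding coset_def using Z0 by force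

lemma crep_coset: "coset Z (crep (coset Z a)) = coset Z a"
proof -
  have "crep (coset Z a) \<in> coset Z a" unfolding crep_def using in_coset by (rule someI)
  then obtain z where "z \<in> Z" "crep (coset Z a) = a + z" unfolding coset_def by auto
  then show ?thesis by (simp add: coset_eq)
qed

lemma quotE: "U \<in> quot Z \<Longrightarrow> (\<And>a. U = coset Z a \<Longrightarrow> P) \<Longrightarrow> P"
  unfolding quot_def by auto

lemma coset_quot[simp]: "coset Z a \<in> quot Z" unfolding quot_def by auto

lemma coset0: "coset Z 0 = Z" unfolding coset_def by auto

lemma coset_Z: "coset Z a = Z \<longleftrightarrow> a \<in> Z" using coset_eq[of a 0] coset0 by simp

lemma qadd_coset[simp]: "qadd Z (coset Z a) (coset Z b) = coset Z (a + b)"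
proof -
  have "crep (coset Z a) - a \<in> Z" "crep (coset Z b) - b \<in> Z"
    using crep_coset coset_eq by blast+
  then have "(crep (coset Z a) + crep (coset Z b)) - (a + b) \<in> Z"
    using Zadd by (metis add_diff_add)
  then show ?thesis unfolding qadd_def by (simp add: coset_eq)
qed

lemma qscale_coset[simp]: "qscale scale Z c (coset Z a) = coset Z (scale c a)"
proof -
  have "crep (coset Z a) - a \<in> Z" using crep_coset coset_eq by blast
  then have "scale c (crep (coset Z a)) - scale c a \<in> Z"
    using Zscale by (metis V.scale_right_diff_distrib)
  then show ?thesis unfolding qscale_def by (simp add: coset_eq)
qed

lemma qbr_coset[simp]: "qbr br Z (coset Z a) (coset Z b) = coset Z (br a b)"
proof -
  obtain z where z: "z \<in> Z" "crep (coset Z a) = a + z"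
    using crep_coset coset_eq by (metis add_diff_cancel_left' diff_add_cancel)
  obtain z' where z': "z' \<in> Z" "crep (coset Z b) = b + z'"
    using crep_coset coset_eq by (metis add_diff_cancel_left' diff_add_cancel)
  show ?thesis unfolding qbr_def using z z' by (simp add: br_shift)
qed


lemma lin_add: "Vector_Spaces.linear scale scale f \<Longrightarrow> f (x + y) = f x + f y"
  by (simp add: Vector_Spaces.linear_iff)
lemma lin_scale: "Vector_Spaces.linear scale scale f \<Longrightarrow> f (scale c x) = scale c (f x)"
  by (simp add: Vector_Spaces.linear_iff)
lemma lin_diff: "Vector_Spaces.linear scale scale f \<Longrightarrow> f (x - y) = f x - f y"
  using lin_add[of f "x - y" y] by (simp add: eq_diff_eq)
lemma lin_0: "Vector_Spaces.linear scale scale f \<Longrightarrow> f 0 = 0"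
  using lin_diff[of f 0 0] by simp

lemma lin_id: "Vector_Spaces.linear scale scale id"
  using vs by (simp add: Vector_Spaces.linear_iff)

lemma lin_comp: "Vector_Spaces.linear scale scale f \<Longrightarrow> Vector_Spaces.linear scale scale g
  \<Longrightarrow> Vector_Spaces.linear scale scale (f \<circ> g)"
  using vs by (simp add: Vector_Spaces.linear_iff)

lemma lin_inv: assumes "Vector_Spaces.linear scale scale f" "bij f"
  shows "Vector_Spaces.linear scale scale (inv_into UNIV f)"
proof -
  have "inv_into UNIV f (x + y) = inv_into UNIV f x + inv_into UNIV f y" for x y
    using assms by (metis bij_inv_eq_iff lin_add)
  moreover have "inv_into UNIV f (scale c x) = scale c (inv_into UNIV f x)" for c x
    using assms by (metis bij_inv_eq_iff lin_scale)
  ultimately show ?thesis using vs by (simp add: Vector_Spaces.linear_iff)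
qed

lemma psi_coset: assumes "Vector_Spaces.linear scale scale f" "f ` Z \<subseteq> Z"
  shows "psi Z f (coset Z a) = coset Z (f a)"
proof -
  have "crep (coset Z a) - a \<in> Z" using crep_coset coset_eq by blast
  then have "f (crep (coset Z a)) - f a \<in> Z" using assms lin_diff by (metis image_subset_iff)
  then show ?thesis unfolding psi_def by (simp add: coset_eq)
qed

lemma lie_aut_inv: assumes "f \<in> lie_aut scale br" shows "inv_into UNIV f \<in> lie_aut scale br"
proof -
  have b: "bij f" and l: "Vector_Spaces.linear scale scale f" and h: "\<forall>a b. f (br a b) = br (f a) (f b)"
    using assms by (auto simp: lie_aut_def)
  have "inv_into UNIV f (br a b) = br (inv_into UNIV f a) (inv_into UNIV f b)" for a b
    using b h by (metis bij_inv_eq_iff)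
  then show ?thesis using b l lin_inv bij_imp_bij_inv by (auto simp: lie_aut_def)
qed

lemma aut_group: "group (aut_grp scale br Z)"
proof (rule groupI)
  fix x y assume "x \<in> carrier (aut_grp scale br Z)" "y \<in> carrier (aut_grp scale br Z)"
  then show "x \<otimes>\<^bsub>aut_grp scale br Z\<^esub> y \<in> carrier (aut_grp scale br Z)"
    unfolding aut_grp_def lie_aut_def by (simp add: bij_comp lin_comp image_comp[symmetric, unfolded comp_def])
next
  show "\<one>\<^bsub>aut_grp scale br Z\<^esub> \<in> carrier (aut_grp scale br Z)"
    by (auto simp: aut_grp_def lie_aut_def lin_id)
next
  fix x y z show "x \<otimes>\<^bsub>aut_grp scale br Z\<^esub> y \<otimes>\<^bsub>aut_grp scale br Z\<^esub> z =
      x \<otimes>\<^bsub>aut_grp scale br Z\<^esub> (y \<otimes>\<^bsub>aut_grp scale br Z\<^esub> z)"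
    by (simp add: aut_grp_def comp_assoc)
next
  fix x show "\<one>\<^bsub>aut_grp scale br Z\<^esub> \<otimes>\<^bsub>aut_grp scale br Z\<^esub> x = x"
    by (simp add: aut_grp_def)
next
  fix x assume x: "x \<in> carrier (aut_grp scale br Z)"
  then have a: "x \<in> lie_aut scale br" and xz: "x ` Z = Z" by (auto simp: aut_grp_def)
  then have b: "bij x" by (simp add: lie_aut_def)
  have "inv_into UNIV x ` Z = Z" using xz b by (metis bij_is_inj image_inv_f_f)
  moreover have "inv_into UNIV x \<circ> x = id" using b by (simp add: bij_is_inj)
  ultimately show "\<exists>y\<in>carrier (aut_grp scale br Z). y \<otimes>\<^bsub>aut_grp scale br Z\<^esub> x = \<one>\<^bsub>aut_grp scale br Z\<^esub>"
    using lie_aut_inv[OF a] by (auto simp: aut_grp_def intro!: bexI[of _ "inv_into UNIV x"])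
qed


lemma qadd_in[simp]: "qadd Z U V \<in> quot Z" by (simp add: qadd_def)
lemma qscale_in[simp]: "qscale scale Z c U \<in> quot Z" by (simp add: qscale_def)
lemma qbr_in[simp]: "qbr br Z U V \<in> quot Z" by (simp add: qbr_def)

lemma qa_in: "f \<in> quot_aut scale br Z \<Longrightarrow> U \<in> quot Z \<Longrightarrow> f U \<in> quot Z"
  unfolding quot_aut_def using bij_betwE by blast

lemma quot_group: "group (quot_aut_grp scale br Z)"
proof (rule groupI)
  fix f g assume f: "f \<in> carrier (quot_aut_grp scale br Z)" and g: "g \<in> carrier (quot_aut_grp scale br Z)"
  then have f': "f \<in> quot_aut scale br Z" and g': "g \<in> quot_aut scale br Z" by (auto simp: quot_aut_grp_def)
  show "f \<otimes>\<^bsub>quot_aut_grp scale br Z\<^esub> g \<in> carrier (quot_aut_grp scale br Z)"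
    using f' g' qa_in[OF g'] unfolding quot_aut_grp_def quot_aut_def
    by (auto simp: compose_eq intro: bij_betw_compose)
next
  show "\<one>\<^bsub>quot_aut_grp scale br Z\<^esub> \<in> carrier (quot_aut_grp scale br Z)"
    by (auto simp: quot_aut_grp_def quot_aut_def bij_betw_def inj_on_def)
next
  fix x y z assume "x \<in> carrier (quot_aut_grp scale br Z)" "y \<in> carrier (quot_aut_grp scale br Z)"
    "z \<in> carrier (quot_aut_grp scale br Z)"
  then show "x \<otimes>\<^bsub>quot_aut_grp scale br Z\<^esub> y \<otimes>\<^bsub>quot_aut_grp scale br Z\<^esub> z =
      x \<otimes>\<^bsub>quot_aut_grp scale br Z\<^esub> (y \<otimes>\<^bsub>quot_aut_grp scale br Z\<^esub> z)"
    using qa_in by (auto simp: quot_aut_grp_def intro!: compose_assoc[symmetric] funcsetI)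
next
  fix x assume "x \<in> carrier (quot_aut_grp scale br Z)"
  then have x: "x \<in> quot_aut scale br Z" by (simp add: quot_aut_grp_def)
  show "\<one>\<^bsub>quot_aut_grp scale br Z\<^esub> \<otimes>\<^bsub>quot_aut_grp scale br Z\<^esub> x = x"
    using x qa_in[OF x] unfolding quot_aut_grp_def quot_aut_def compose_def extensional_def
    by (intro ext) auto
next
  fix f assume "f \<in> carrier (quot_aut_grp scale br Z)"
  then have f: "f \<in> quot_aut scale br Z" by (simp add: quot_aut_grp_def)
  then have bf: "bij_betw f (quot Z) (quot Z)" by (simp add: quot_aut_def)
  define g where "g = restrict (inv_into (quot Z) f) (quot Z)"
  have gin: "g U \<in> quot Z" if "U \<in> quot Z" for U
    using that bf by (simp add: g_def bij_betw_imp_surj_on inv_into_into)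
  have fg: "f (g U) = U" if "U \<in> quot Z" for U
    using that bf by (simp add: g_def bij_betw_inv_into_right)
  have gf: "g (f U) = U" if "U \<in> quot Z" for U
    using that bf qa_in[OF f] by (simp add: g_def bij_betw_inv_into_left)
  have "bij_betw g (quot Z) (quot Z)"
  proof -
    have "bij_betw (inv_into (quot Z) f) (quot Z) (quot Z)" using bf by (rule bij_betw_inv_into)
    then show ?thesis unfolding g_def by (rule bij_betw_cong[THEN iffD1, rotated]) simp
  qed
  moreover have "g (qadd Z U V) = qadd Z (g U) (g V)" if "U \<in> quot Z" "V \<in> quot Z" for U V
  proof -
    have "f (qadd Z (g U) (g V)) = qadd Z U V" using f that gin fg by (simp add: quot_aut_def)
    then show ?thesis using gf[of "qadd Z (g U) (g V)"] by simp
  qed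
  moreover have "g (qscale scale Z c U) = qscale scale Z c (g U)" if "U \<in> quot Z" for U c
  proof -
    have "f (qscale scale Z c (g U)) = qscale scale Z c U" using f that gin fg by (simp add: quot_aut_def)
    then show ?thesis using gf[of "qscale scale Z c (g U)"] by simp
  qed
  moreover have "g (qbr br Z U V) = qbr br Z (g U) (g V)" if "U \<in> quot Z" "V \<in> quot Z" for U V
  proof -
    have "f (qbr br Z (g U) (g V)) = qbr br Z U V" using f that gin fg by (simp add: quot_aut_def)
    then show ?thesis using gf[of "qbr br Z (g U) (g V)"] by simp
  qed
  ultimately have gq: "g \<in> quot_aut scale br Z" by (simp add: quot_aut_def g_def)
  have "compose (quot Z) g f = restrict id (quot Z)"
    by (rule extensionalityI[of _ "quot Z"]) (auto simp: compose_def gf)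
  then show "\<exists>y\<in>carrier (quot_aut_grp scale br Z). y \<otimes>\<^bsub>quot_aut_grp scale br Z\<^esub> f = \<one>\<^bsub>quot_aut_grp scale br Z\<^esub>"
    using gq by (auto simp: quot_aut_grp_def)
qed


lemma quot_all: "(\<forall>U\<in>quot Z. P U) \<longleftrightarrow> (\<forall>a. P (coset Z a))"
  unfolding quot_def by auto

lemma carrierD: assumes "f \<in> carrier (aut_grp scale br Z)"
  shows "bij f" "Vector_Spaces.linear scale scale f" "f ` Z = Z" "\<And>a b. f (br a b) = br (f a) (f b)"
  using assms by (auto simp: aut_grp_def lie_aut_def)

lemma psi_in: assumes f: "f \<in> carrier (aut_grp scale br Z)"
  shows "psi Z f \<in> quot_aut scale br Z"
proof -
  note D = carrierD[OF f]
  have pc: "psi Z f (coset Z a) = coset Z (f a)" for a using D psi_coset by simp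
  have inj: "inj_on (psi Z f) (quot Z)"
  proof (rule inj_onI)
    fix U V assume "U \<in> quot Z" "V \<in> quot Z" "psi Z f U = psi Z f V"
    then obtain a b where ab: "U = coset Z a" "V = coset Z b" "coset Z (f a) = coset Z (f b)"
      using pc by (metis quotE)
    then have "f (a - b) \<in> Z" using D(2) by (simp add: coset_eq lin_diff)
    then obtain z where "z \<in> Z" "f (a - b) = f z" using D(3) by (metis imageE)
    then have "a - b \<in> Z" using D(1) by (metis bij_is_inj injD)
    then show "U = V" using ab by (simp add: coset_eq)
  qed
  have surj: "psi Z f ` quot Z = quot Z"
  proof
    show "psi Z f ` quot Z \<subseteq> quot Z" using pc by (auto simp: quot_def)
    show "quot Z \<subseteq> psi Z f ` quot Z"
    proof
      fix U assume "U \<in> quot Z"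
      then obtain b where "U = coset Z b" by (metis quotE)
      moreover have "f (inv_into UNIV f b) = b" using D(1) by (simp add: surj_f_inv_f bij_is_surj)
      ultimately show "U \<in> psi Z f ` quot Z" using pc by (metis coset_quot image_eqI)
    qed
  qed
  have ext: "psi Z f \<in> extensional (quot Z)" by (simp add: psi_def)
  have a: "\<forall>U\<in>quot Z. \<forall>V\<in>quot Z. psi Z f (qadd Z U V) = qadd Z (psi Z f U) (psi Z f V)"
    unfolding quot_all by (simp add: pc lin_add[OF D(2)])
  have b: "\<forall>c. \<forall>U\<in>quot Z. psi Z f (qscale scale Z c U) = qscale scale Z c (psi Z f U)"
    unfolding quot_all by (simp add: pc lin_scale[OF D(2)])
  have c: "\<forall>U\<in>quot Z. \<forall>V\<in>quot Z. psi Z f (qbr br Z U V) = qbr br Z (psi Z f U) (psi Z f V)"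
    unfolding quot_all by (simp add: pc D(4))
  show ?thesis unfolding quot_aut_def
    using inj surj ext a b c by (simp add: bij_betw_def)
qed

lemma psi_hom: "psi Z \<in> hom (aut_grp scale br Z) (quot_aut_grp scale br Z)"
proof (rule homI)
  fix f assume "f \<in> carrier (aut_grp scale br Z)"
  then show "psi Z f \<in> carrier (quot_aut_grp scale br Z)" using psi_in by (simp add: quot_aut_grp_def)
next
  fix f g assume f: "f \<in> carrier (aut_grp scale br Z)" and g: "g \<in> carrier (aut_grp scale br Z)"
  have fg: "f \<circ> g \<in> carrier (aut_grp scale br Z)"
    using monoid.m_closed[OF group.is_monoid[OF aut_group] f g] by (simp add: aut_grp_def)
  note Df = carrierD[OF f] and Dg = carrierD[OF g] and Dfg = carrierD[OF fg]
  show "psi Z (f \<otimes>\<^bsub>aut_grp scale br Z\<^esub> g) = psi Z f \<otimes>\<^bsub>quot_aut_grp scale br Z\<^esub> psi Z g"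
  proof -
    have "psi Z (f \<circ> g) = compose (quot Z) (psi Z f) (psi Z g)"
    proof (rule extensionalityI[of _ "quot Z"])
      show "psi Z (f \<circ> g) \<in> extensional (quot Z)" by (simp add: psi_def)
      show "compose (quot Z) (psi Z f) (psi Z g) \<in> extensional (quot Z)" by simp
      fix U assume "U \<in> quot Z"
      then obtain a where "U = coset Z a" by (metis quotE)
      then show "psi Z (f \<circ> g) U = compose (quot Z) (psi Z f) (psi Z g) U"
        using Df Dg Dfg by (simp add: compose_eq psi_coset del: psi_def)
    qed
    then show ?thesis by (simp add: aut_grp_def quot_aut_grp_def)
  qed
qed


lemma fix_derived:
  assumes l: "Vector_Spaces.linear scale scale f" and h: "\<And>a b. f (br a b) = br (f a) (f b)"
    and fa: "\<And>a. f a - a \<in> Z" and d: "d \<in> derived scale br"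
  shows "f d = d"
proof -
  have d': "d \<in> V.span {br a b | a b. True}" using d by (simp add: derived_def)
  show ?thesis
  proof (rule V.span_induct[OF d', where P = "\<lambda>d. f d = d"])
    show "V.subspace {d. f d = d}"
      unfolding V.subspace_def using l by (simp add: lin_0 lin_add lin_scale)
  next
    fix x assume "x \<in> {br a b | a b. True}"
    then obtain a b where x: "x = br a b" by auto
    have "f x = br (a + (f a - a)) (b + (f b - b))" using x h by simp
    also have "\<dots> = x" using x fa br_shift[of "f a - a" "f b - b" a b] by simp
    finally show "f x = x" .
  qed
qed

lemma coset0_eq: "coset Z a = coset Z 0 \<longleftrightarrow> a \<in> Z" using coset_eq[of a 0] by simp

lemma kernel_char:
  fixes s :: "'g set \<Rightarrow> 'g"
  assumes s_lin: "quot_linear scale Z scale s"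
    and s_sec: "\<forall>w\<in>quot Z. coset Z (s w) = w"
    and Z_derived: "Z \<subseteq> derived scale br"
  shows "kernel (aut_grp scale br Z) (quot_aut_grp scale br Z) (psi Z) = tau_maps scale br Z s"
proof
  have sadd: "s (coset Z (a + b)) = s (coset Z a) + s (coset Z b)" for a b
    using s_lin qadd_coset[of a b] unfolding quot_linear_def by (metis coset_quot)
  have sscale: "s (coset Z (scale c a)) = scale c (s (coset Z a))" for c a
    using s_lin qscale_coset[of c a] unfolding quot_linear_def by (metis coset_quot)
  have ssec: "s (coset Z a) - a \<in> Z" for a
    using s_sec coset_eq by (metis coset_quot)
  show "kernel (aut_grp scale br Z) (quot_aut_grp scale br Z) (psi Z) \<subseteq> tau_maps scale br Z s"
  proof
    fix f assume "f \<in> kernel (aut_grp scale br Z) (quot_aut_grp scale br Z) (psi Z)"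
    then have fc: "f \<in> carrier (aut_grp scale br Z)" and pf: "psi Z f = restrict id (quot Z)"
      by (auto simp: kernel_def quot_aut_grp_def)
    note D = carrierD[OF fc]
    have fa: "f a - a \<in> Z" for a
    proof -
      have "psi Z f (coset Z a) = coset Z a" using pf by simp
      then show ?thesis using psi_coset[OF D(2)] D(3) coset_eq by simp
    qed
    have fd: "f d = d" if "d \<in> derived scale br" for d
      using fix_derived[OF D(2) D(4) fa that] .
    have fZ: "f z = z" if "z \<in> Z" for z using fd Z_derived that by blast
    define \<phi> where "\<phi> = (\<lambda>w. f (s w) - s w)"
    have "quot_linear scale Z scale \<phi>"
      unfolding quot_linear_def quot_all \<phi>_def
      by (simp add: sadd sscale lin_add[OF D(2)] lin_scale[OF D(2)] V.scale_right_diff_distrib)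
    moreover have "\<phi> ` quot Z \<subseteq> Z" unfolding \<phi>_def using fa by auto
    moreover have "\<phi> ` quot_derived scale br Z \<subseteq> {0}"
    proof
      fix x assume "x \<in> \<phi> ` quot_derived scale br Z"
      then obtain d where d: "d \<in> derived scale br" "x = \<phi> (coset Z d)"
        by (auto simp: quot_derived_def)
      define z where "z = s (coset Z d) - d"
      have z: "z \<in> Z" using ssec z_def by simp
      have "x = f (d + z) - (d + z)" using d z_def \<phi>_def by simp
      also have "\<dots> = 0" using fd[OF d(1)] fZ[OF z] lin_add[OF D(2)] by simp
      finally show "x \<in> {0}" by simp
    qed
    moreover have "\<forall>w\<in>quot Z. f (s w) = s w + \<phi> w" by (simp add: \<phi>_def)
    ultimately show "f \<in> tau_maps scale br Z s" unfolding tau_maps_def using D(2) fZ by blast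
  qed
  show "tau_maps scale br Z s \<subseteq> kernel (aut_grp scale br Z) (quot_aut_grp scale br Z) (psi Z)"
  proof
    fix t assume "t \<in> tau_maps scale br Z s"
    then obtain \<phi> where l: "Vector_Spaces.linear scale scale t" and ql: "quot_linear scale Z scale \<phi>"
      and pZ: "\<phi> ` quot Z \<subseteq> Z" and pd: "\<phi> ` quot_derived scale br Z \<subseteq> {0}"
      and ts: "\<forall>w\<in>quot Z. t (s w) = s w + \<phi> w" and tZ: "\<forall>z\<in>Z. t z = z"
      unfolding tau_maps_def by blast
    have pZ': "\<phi> (coset Z a) \<in> Z" for a using pZ by auto
    have key: "t a = a + \<phi> (coset Z a)" for a
    proof -
      define w where "w = coset Z a"
      have "t a = t (s w - (s w - a))" by simp
      also have "\<dots> = t (s w) - t (s w - a)" by (rule lin_diff[OF l])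
      also have "t (s w) = s w + \<phi> w" using ts w_def by simp
      also have "t (s w - a) = s w - a" using tZ ssec[of a] w_def by simp
      finally show ?thesis unfolding w_def by (simp add: algebra_simps)
    qed
    have p0: "\<phi> (coset Z 0) = 0"
    proof -
      have "\<phi> (qadd Z (coset Z 0) (coset Z 0)) = \<phi> (coset Z 0) + \<phi> (coset Z 0)"
        using ql unfolding quot_linear_def by (meson coset_quot)
      then show ?thesis by simp
    qed
    have inj: "inj t"
    proof (rule injI)
      fix a b assume "t a = t b"
      then have e: "t (a - b) = 0" using lin_diff[OF l] by simp
      then have "a - b = - \<phi> (coset Z (a - b))" using key[of "a - b"] by (simp add: eq_neg_iff_add_eq_0)
      then have ab: "a - b \<in> Z" using pZ' Zneg by metis
      then have "coset Z (a - b) = coset Z 0" using coset0_eq by simp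
      then have "a - b = 0" using key[of "a - b"] e p0 by simp
      then show "a = b" by simp
    qed
    have surj: "surj t"
    proof (rule surjI)
      fix b
      have "coset Z (b - \<phi> (coset Z b)) = coset Z b" using pZ'[of b] coset_eq Zneg by simp
      then show "t (b - \<phi> (coset Z b)) = b" using key[of "b - \<phi> (coset Z b)"] by simp
    qed
    have hbr: "t (br a b) = br (t a) (t b)" for a b
    proof -
      have "br a b \<in> derived scale br" unfolding derived_def by (rule V.span_base) blast
      then have "\<phi> (coset Z (br a b)) \<in> {0}" using pd by (auto simp: quot_derived_def)
      then have "t (br a b) = br a b" using key by simp
      also have "\<dots> = br (t a) (t b)" using key br_shift pZ' by simp
      finally show ?thesis .
    qed
    have tZZ: "t ` Z = Z" using tZ by (simp add: image_cong)
    have tc: "t \<in> carrier (aut_grp scale br Z)"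
      using inj surj l hbr tZZ by (simp add: aut_grp_def lie_aut_def bij_def)
    have "psi Z t = restrict id (quot Z)"
    proof (rule extensionalityI[of _ "quot Z"])
      show "psi Z t \<in> extensional (quot Z)" by (simp add: psi_def)
      show "restrict id (quot Z) \<in> extensional (quot Z)" by simp
      fix U assume "U \<in> quot Z"
      then obtain a where U: "U = coset Z a" by (metis quotE)
      have "psi Z t (coset Z a) = coset Z (t a)" using psi_coset[OF l] tZZ by simp
      also have "\<dots> = coset Z a" using key pZ' coset_eq by simp
      finally show "psi Z t U = restrict id (quot Z) U" using U by simp
    qed
    then show "t \<in> kernel (aut_grp scale br Z) (quot_aut_grp scale br Z) (psi Z)"
      using tc by (simp add: kernel_def quot_aut_grp_def)
  qed
qed


lemma psi_surj:
  assumes ext: "\<forall>\<sigma>\<in>quot_aut scale br Z. \<exists>\<sigma>'\<in>lie_aut scale br. \<forall>a. coset Z (\<sigma>' a) = \<sigma> (coset Z a)"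
    and sq: "\<sigma> \<in> quot_aut scale br Z"
  shows "\<sigma> \<in> psi Z ` carrier (aut_grp scale br Z)"
proof -
  obtain f where fl: "f \<in> lie_aut scale br" and fc: "\<And>a. coset Z (f a) = \<sigma> (coset Z a)"
    using ext sq by blast
  have bf: "bij f" and lf: "Vector_Spaces.linear scale scale f" using fl by (auto simp: lie_aut_def)
  have bs: "bij_betw \<sigma> (quot Z) (quot Z)" using sq by (simp add: quot_aut_def)
  obtain c where c: "\<sigma> (coset Z 0) = coset Z c" using qa_in[OF sq, of "coset Z 0"] by (metis quotE coset_quot)
  have "\<sigma> (qadd Z (coset Z 0) (coset Z 0)) = qadd Z (\<sigma> (coset Z 0)) (\<sigma> (coset Z 0))"
  proof -
    have "\<forall>U\<in>quot Z. \<forall>V\<in>quot Z. \<sigma> (qadd Z U V) = qadd Z (\<sigma> U) (\<sigma> V)"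
      using sq unfolding quot_aut_def by blast
    then show ?thesis using coset_quot by blast
  qed
  then have "coset Z c = coset Z (c + c)" using c by simp
  then have "- c \<in> Z" using coset_eq by simp
  then have "c \<in> Z" using Zneg by fastforce
  then have s0: "\<sigma> (coset Z 0) = coset Z 0" using c coset0_eq by simp
  have fZ: "f z \<in> Z" if "z \<in> Z" for z
  proof -
    have "coset Z z = coset Z 0" using that coset0_eq by simp
    then have "coset Z (f z) = coset Z 0" using fc s0 by simp
    then show ?thesis using coset0_eq by simp
  qed
  have Zf: "z \<in> f ` Z" if "z \<in> Z" for z
  proof -
    define y where "y = inv_into UNIV f z"
    have fy: "f y = z" using bf by (simp add: y_def surj_f_inv_f bij_is_surj)
    have "coset Z z = coset Z 0" using that coset0_eq by simp
    then have "\<sigma> (coset Z y) = coset Z 0" using fc[of y] fy by simp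
    then have "\<sigma> (coset Z y) = \<sigma> (coset Z 0)" using s0 by simp
    then have "coset Z y = coset Z 0" using bs by (simp add: bij_betw_def inj_on_def)
    then have "y \<in> Z" using coset0_eq by simp
    then show ?thesis using fy by blast
  qed
  have fZZ: "f ` Z = Z" using fZ Zf by blast
  have fcar: "f \<in> carrier (aut_grp scale br Z)" using fl fZZ by (simp add: aut_grp_def)
  have "psi Z f = \<sigma>"
  proof (rule extensionalityI[of _ "quot Z"])
    show "psi Z f \<in> extensional (quot Z)" by (simp add: psi_def)
    show "\<sigma> \<in> extensional (quot Z)" using sq by (simp add: quot_aut_def)
    fix U assume "U \<in> quot Z"
    then obtain a where U: "U = coset Z a" by (metis quotE)
    show "psi Z f U = \<sigma> U" using U psi_coset[OF lf] fZZ fc by simp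
  qed
  then show ?thesis using fcar by blast
qed

end

theorem corollary3p2:
  fixes scale :: "'k::field \<Rightarrow> 'g::ab_group_add \<Rightarrow> 'g"
    and br :: "'g \<Rightarrow> 'g \<Rightarrow> 'g"
    and Z :: "'g set"
    and s :: "'g set \<Rightarrow> 'g"
  assumes lie: "lie_algebra scale br"
    and Z_sub: "module.subspace scale Z"
    and Z_centre: "Z \<subseteq> lie_centre br"
    and s_lin: "quot_linear scale Z scale s"
    and s_sec: "\<forall>w\<in>quot Z. proj Z (s w) = w"
    and ext: "\<forall>\<sigma>\<in>quot_aut scale br Z. \<exists>\<sigma>'\<in>lie_aut scale br. \<forall>a. proj Z (\<sigma>' a) = \<sigma> (proj Z a)"
    and Z_derived: "Z \<subseteq> derived scale br"
  shows "group (aut_grp scale br Z) \<and>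
         group (quot_aut_grp scale br Z) \<and>
         subgroup (tau_maps scale br Z s) (aut_grp scale br Z) \<and>
         psi Z \<in> epi (aut_grp scale br Z) (quot_aut_grp scale br Z) \<and>
         kernel (aut_grp scale br Z) (quot_aut_grp scale br Z) (psi Z) = tau_maps scale br Z s"
proof -
  interpret L: LZ scale br Z using lie Z_sub Z_centre by (rule LZ.intro)
  have G: "group (aut_grp scale br Z)" by (rule L.aut_group)
  have H: "group (quot_aut_grp scale br Z)" by (rule L.quot_group)
  have hom: "psi Z \<in> hom (aut_grp scale br Z) (quot_aut_grp scale br Z)" by (rule L.psi_hom)
  have gh: "group_hom (aut_grp scale br Z) (quot_aut_grp scale br Z) (psi Z)"
    using G H hom by (simp add: group_hom_def group_hom_axioms_def)
  have K: "kernel (aut_grp scale br Z) (quot_aut_grp scale br Z) (psi Z) = tau_maps scale br Z s"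
    using L.kernel_char[OF s_lin s_sec Z_derived] .
  have "psi Z ` carrier (aut_grp scale br Z) = carrier (quot_aut_grp scale br Z)"
  proof
    show "psi Z ` carrier (aut_grp scale br Z) \<subseteq> carrier (quot_aut_grp scale br Z)"
      using hom by (auto simp: hom_def)
    show "carrier (quot_aut_grp scale br Z) \<subseteq> psi Z ` carrier (aut_grp scale br Z)"
      using L.psi_surj[OF ext] by (auto simp: quot_aut_grp_def)
  qed
  then have E: "psi Z \<in> epi (aut_grp scale br Z) (quot_aut_grp scale br Z)"
    using hom by (simp add: epi_def)
  show ?thesis using G H E K group_hom.subgroup_kernel[OF gh] by simp
qed

end
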